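(* Let $S$ be an isolated invariant set for $f$. Suppose $P'=(N,L')$ and $P=(N\cup L,L)$ are filtration pairs for $S$ with $L'\subset L$ and $f(L)\subset\operatorname{Int}L$. Then the pointed space maps $f_{P'}$ and $f_P$ are shift equivalent.
   Context: Let $X$ be a locally compact metric space, $U\subset X$ open and $f:U\to X$ continuous. A solution through $x$ is a map $\sigma:\mathbb Z\to U$ with $\sigma(0)=x$ and $f(\sigma(n))=\sigma(n+1)$ for all $n$; for $N\subset U$, $\operatorname{Inv}N$ is the set of $x\in N$ admitting a solution through $x$ with values in $N$. A compact $N\subset U$ is an isolating neighborhood if $\operatorname{Inv}N\subset\operatorname{Int}N$; $S$ is an isolated invariant set if $S=\operatorname{Inv}N$ for some isolating neighborhood $N$. The exit set is $N^-=\{x\in N:f(x)\notin\operatorname{Int}N\}$. A filtration pair for $S$ is a pair of compact sets $L\subset N$ in the interior of the domain of $f$, each the closure of its interior, with (1) $\operatorname{cl}(N\setminus L)$ an isolating neighborhood and $\operatorname{Inv}\operatorname{cl}(N\setminus L)=S$; (2) $L$ a neighborhood of $N^-$ in $N$; (3) $f(L)\cap\operatorname{cl}(N\setminus L)=\emptyset$. For a filtration pair $P=(N,L)$, $N_L=N/L$ with $L$ collapsed to the base point $[L]$ (if $L=\emptyset$, a disjoint point $[L]$ is adjoined), $p:N\to N_L$ the quotient map, and the pointed space map $f_P:N_L\to N_L$ is $f_P([L])=[L]$, $f_P(p(x))=p(f(x))$ for $x\in N\setminus L$. Base-point preserving maps $F:Y\to Y$, $G:Y'\to Y'$ are shift equivalent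 if there exist $m\in\mathbb Z^+$ and continuous base-point preserving $r:Y\to Y'$, $s:Y'\to Y$ with $r\circ F=G\circ r$, $s\circ G=F\circ s$, $s\circ r=F^m$, $r\circ s=G^m$. *)

theory Defs
  imports "HOL-Analysis.Analysis"
begin

text \<open>Ambient space: a locally compact subset X of a metric space type, with the
  subspace topology. Interior and closure are taken relative to X.\<close>

definition Inv :: "('a \<Rightarrow> 'a) \<Rightarrow> 'a set \<Rightarrow> 'a set" where
  "Inv f N = {x \<in> N. \<exists>\<sigma>::int \<Rightarrow> 'a. \<sigma> 0 = x \<and> (\<forall>n. \<sigma> n \<in> N) \<and> (\<forall>n. f (\<sigma> n) = \<sigma> (n + 1))}"

definition isolating_nbhd :: "'a::metric_space set \<Rightarrow> 'a set \<Rightarrow> ('a \<Rightarrow> 'a) \<Rightarrow> 'a set \<Rightarrow> bool" where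
  "isolating_nbhd X U f N \<longleftrightarrow> compact N \<and> N \<subseteq> U \<and> Inv f N \<subseteq> (top_of_set X) interior_of N"

definition isolated_invariant_set :: "'a::metric_space set \<Rightarrow> 'a set \<Rightarrow> ('a \<Rightarrow> 'a) \<Rightarrow> 'a set \<Rightarrow> bool" where
  "isolated_invariant_set X U f S \<longleftrightarrow> (\<exists>N. isolating_nbhd X U f N \<and> S = Inv f N)"

definition exit_set :: "'a::metric_space set \<Rightarrow> ('a \<Rightarrow> 'a) \<Rightarrow> 'a set \<Rightarrow> 'a set" where
  "exit_set X f N = {x \<in> N. f x \<notin> (top_of_set X) interior_of N}"

definition regular_closed_in :: "'a::metric_space set \<Rightarrow> 'a set \<Rightarrow> bool" where
  "regular_closed_in X A \<longleftrightarrow> (top_of_set X) closure_of ((top_of_set X) interior_of A) = A"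

text \<open>Filtration pair (N, L) for S. The domain of f is the open set U, so its interior is U.\<close>
definition filtration_pair :: "'a::metric_space set \<Rightarrow> 'a set \<Rightarrow> ('a \<Rightarrow> 'a) \<Rightarrow> 'a set \<Rightarrow> 'a set \<Rightarrow> 'a set \<Rightarrow> bool" where
  "filtration_pair X U f S N L \<longleftrightarrow>
     compact N \<and> compact L \<and> L \<subseteq> N \<and> N \<subseteq> U \<and>
     regular_closed_in X N \<and> regular_closed_in X L \<and>
     isolating_nbhd X U f ((top_of_set X) closure_of (N - L)) \<and>
     Inv f ((top_of_set X) closure_of (N - L)) = S \<and>
     exit_set X f N \<subseteq> (top_of_set N) interior_of L \<and>
     f ` L \<inter> (top_of_set X) closure_of (N - L) = {}"

text \<open>The pointed quotient space N/L. Points are sets: the class of x \<in> N - L is {x},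
  and the base point is L itself (when L = {} this is the extra point {}, disjoint from
  all classes {x}).\<close>
definition pquot :: "'a set \<Rightarrow> 'a \<Rightarrow> 'a set" where
  "pquot L x = (if x \<in> L then L else {x})"

definition quot_carrier :: "'a set \<Rightarrow> 'a set \<Rightarrow> 'a set set" where
  "quot_carrier N L = insert L (pquot L ` N)"

definition quot_open :: "'a::topological_space set \<Rightarrow> 'a set \<Rightarrow> 'a set set \<Rightarrow> bool" where
  "quot_open N L V \<longleftrightarrow> V \<subseteq> quot_carrier N L \<and> openin (top_of_set N) {x \<in> N. pquot L x \<in> V}"

lemma istopology_quot_open: "istopology (quot_open N L)"
  unfolding istopology_def quot_open_def
proof (intro conjI allI impI)
  fix S T assume h: "S \<subseteq> quot_carrier N L \<and> openin (top_of_set N) {x \<in> N. pquot L x \<in> S}"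
    "T \<subseteq> quot_carrier N L \<and> openin (top_of_set N) {x \<in> N. pquot L x \<in> T}"
  show "S \<inter> T \<subseteq> quot_carrier N L" using h by blast
  have "{x \<in> N. pquot L x \<in> S \<inter> T} = {x \<in> N. pquot L x \<in> S} \<inter> {x \<in> N. pquot L x \<in> T}" by blast
  then show "openin (top_of_set N) {x \<in> N. pquot L x \<in> S \<inter> T}" using h by (simp add: openin_Int)
next
  fix K assume h: "\<forall>S\<in>K. S \<subseteq> quot_carrier N L \<and> openin (top_of_set N) {x \<in> N. pquot L x \<in> S}"
  show "\<Union>K \<subseteq> quot_carrier N L" using h by blast
  have "{x \<in> N. pquot L x \<in> \<Union>K} = (\<Union>S\<in>K. {x \<in> N. pquot L x \<in> S})" by blast
  then show "openin (top_of_set N) {x \<in> N. pquot L x \<in> \<Union>K}" using h by (auto intro!: openin_Union)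
qed

definition quot_space :: "'a::topological_space set \<Rightarrow> 'a set \<Rightarrow> 'a set topology" where
  "quot_space N L = topology (quot_open N L)"

lemma openin_quot_space: "openin (quot_space N L) V \<longleftrightarrow> quot_open N L V"
  unfolding quot_space_def by (simp add: istopology_quot_open)

definition fP :: "'a set \<Rightarrow> 'a set \<Rightarrow> ('a \<Rightarrow> 'a) \<Rightarrow> 'a set \<Rightarrow> 'a set" where
  "fP N L f y = (if y = L then L else pquot L (f (the_elem y)))"

definition shift_equivalent ::
  "'b topology \<Rightarrow> 'b \<Rightarrow> ('b \<Rightarrow> 'b) \<Rightarrow> 'c topology \<Rightarrow> 'c \<Rightarrow> ('c \<Rightarrow> 'c) \<Rightarrow> bool" where
  "shift_equivalent Y y0 F Y' y0' G \<longleftrightarrow>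
     (\<exists>m::nat. m > 0 \<and> (\<exists>r s.
        continuous_map Y Y' r \<and> continuous_map Y' Y s \<and> r y0 = y0' \<and> s y0' = y0 \<and>
        (\<forall>y\<in>topspace Y. r (F y) = G (r y)) \<and>
        (\<forall>y\<in>topspace Y'. s (G y) = F (s y)) \<and>
        (\<forall>y\<in>topspace Y. s (r y) = (F ^^ m) y) \<and>
        (\<forall>y\<in>topspace Y'. r (s y) = (G ^^ m) y)))"

end

theory Submission
  imports Defs
begin


lemma my_nest:
  fixes F :: "nat \<Rightarrow> 'a::t2_space set"
  assumes c: "\<And>n. compact (F n)" and ne: "\<And>n. F n \<noteq> {}" and dec: "\<And>n. F (Suc n) \<subseteq> F n"
  shows "\<Inter> (range F) \<noteq> {}"
proof -
  have anti: "m \<le> n \<Longrightarrow> F n \<subseteq> F m" for m n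
    by (rule lift_Suc_antimono_le[of F, OF dec])
  have "F 0 \<inter> \<Inter> (range F) \<noteq> {}"
  proof (rule compact_imp_fip)
    show "compact (F 0)" by (rule c)
    fix T assume "T \<in> range F"
    then obtain n where "T = F n" by blast
    then show "closed T" using compact_imp_closed[OF c[of n]] by simp
  next
    fix F' assume "finite F'" "F' \<subseteq> range F"
    then obtain I where I: "finite I" "F' = F ` I" by (meson finite_subset_image)
    define k where "k = (if I = {} then 0 else Max I)"
    have sub: "F k \<subseteq> F i" if "i \<in> I" for i
    proof -
      have "I \<noteq> {}" using that by blast
      then have "k = Max I" unfolding k_def by simp
      then have "i \<le> k" using that I(1) by simp
      then show ?thesis by (rule anti)
    qed
    have "F k \<subseteq> F 0" by (rule anti) simp
    moreover have "F k \<subseteq> \<Inter> F'" unfolding I(2) using sub by (simp add: INF_greatest)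
    ultimately have "F k \<subseteq> F 0 \<inter> \<Inter> F'" by (rule Int_greatest)
    then show "F 0 \<inter> \<Inter> F' \<noteq> {}" using ne[of k] by (metis subset_empty)
  qed
  then show ?thesis by auto
qed

lemma compact_preimage_in:
  fixes K :: "'a::t2_space set"
  assumes K: "compact K" and fc: "continuous_on K f" and T: "closed T"
  shows "compact {y\<in>K. f y \<in> T}"
proof -
  have "closedin (top_of_set K) (K \<inter> f -` T)" by (rule continuous_closedin_preimage[OF fc T])
  then have "closed (K \<inter> f -` T)" by (rule closedin_closed_trans) (rule compact_imp_closed[OF K])
  then have "compact (K \<inter> (K \<inter> f -` T))" by (rule compact_Int_closed[OF K])
  moreover have "{y\<in>K. f y \<in> T} = K \<inter> (K \<inter> f -` T)" by auto
  ultimately show ?thesis by simp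
qed

lemma allSuc: "(\<forall>j\<le>Suc m. P j) \<longleftrightarrow> (P 0 \<and> (\<forall>j\<le>m. P (Suc j)))"
  by (metis Suc_le_mono le0 not0_implies_Suc)

lemma chain_inv:
  fixes f :: "'a::metric_space \<Rightarrow> 'a"
  assumes K: "compact K" and fc: "continuous_on K f" and ch: "\<forall>m. \<exists>y\<in>K. \<forall>j\<le>m. (f^^j) y \<in> K"
  shows "Inv f K \<noteq> {}"
proof -
  define C where "C m = {y\<in>K. \<forall>j\<le>m. (f^^j) y \<in> K}" for m
  have Csuc: "C (Suc m) = {y\<in>K. f y \<in> C m}" for m
  proof -
    have "(\<forall>j\<le>Suc m. (f^^j) y \<in> K) \<longleftrightarrow> y \<in> K \<and> (\<forall>j\<le>m. (f^^j) (f y) \<in> K)" for y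
      unfolding allSuc by (simp add: funpow_Suc_right del: funpow.simps)
    then show ?thesis unfolding C_def by auto
  qed
  have Ccomp: "compact (C m)" for m
  proof (induction m)
    case 0
    have "C 0 = K" unfolding C_def by auto
    then show ?case using K by simp
  next
    case (Suc m)
    then have "closed (C m)" using compact_imp_closed by blast
    then show ?case unfolding Csuc by (rule compact_preimage_in[OF K fc])
  qed
  have Cne: "C m \<noteq> {}" for m using ch unfolding C_def by blast
  have Cdec: "C (Suc m) \<subseteq> C m" for m unfolding C_def by auto
  define I where "I = \<Inter> (range C)"
  have Ine: "I \<noteq> {}" unfolding I_def by (rule my_nest[of C, OF Ccomp Cne Cdec])
  have IK: "I \<subseteq> K" unfolding I_def C_def by auto
  have Icomp: "compact I"
  proof -
    have "closed I" unfolding I_def by (intro closed_INT) (use Ccomp compact_imp_closed in blast)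
    then have "compact (C 0 \<inter> I)" using compact_Int_closed[OF Ccomp[of 0]] by blast
    moreover have "C 0 \<inter> I = I" unfolding I_def by auto
    ultimately show ?thesis by simp
  qed
  have fI: "f ` I \<subseteq> I"
  proof
    fix z assume "z \<in> f ` I"
    then obtain y where y: "y \<in> I" "z = f y" by blast
    have "z \<in> C m" for m using y Csuc[of m] unfolding I_def by auto
    then show "z \<in> I" unfolding I_def by auto
  qed
  have fcI: "continuous_on I f" using fc IK continuous_on_subset by blast
  have fpc: "continuous_on I (f^^m)" for m
  proof (induction m)
    case 0 then show ?case by (simp add: continuous_on_id)
  next
    case (Suc m)
    have "continuous_on I (f \<circ> (f^^m))"
    proof (rule continuous_on_compose)
      show "continuous_on I (f^^m)" by (rule Suc)
      have "(f^^m) ` I \<subseteq> I"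
        by (induction m) (use fI in auto)
      then show "continuous_on ((f^^m) ` I) f" using fcI continuous_on_subset by blast
    qed
    then show ?case by simp
  qed
  have fpI: "(f^^m) ` I \<subseteq> I" for m
    by (induction m) (use fI in auto)
  define E where "E m = (f^^m) ` I" for m
  have Ecomp: "compact (E m)" for m unfolding E_def using compact_continuous_image[OF fpc Icomp] .
  have Ene: "E m \<noteq> {}" for m unfolding E_def using Ine by blast
  have Edec: "E (Suc m) \<subseteq> E m" for m
  proof -
    have "E (Suc m) = (f^^m) ` (f ` I)" unfolding E_def by (simp add: funpow_Suc_right image_comp del: funpow.simps)
    then show ?thesis unfolding E_def using image_mono[OF fI] by simp
  qed
  define J where "J = \<Inter> (range E)"
  have Jne: "J \<noteq> {}" unfolding J_def by (rule my_nest[of E, OF Ecomp Ene Edec])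
  have JI: "J \<subseteq> I"
  proof -
    have "E 0 = I" unfolding E_def by simp
    then show ?thesis unfolding J_def by blast
  qed
  have Jback: "\<exists>z\<in>J. f z = y" if y: "y \<in> J" for y
  proof -
    define D where "D m = {z\<in>E m. f z \<in> {y}}" for m
    have Dcomp: "compact (D m)" for m unfolding D_def
    proof (rule compact_preimage_in[OF Ecomp])
      show "continuous_on (E m) f" using continuous_on_subset[OF fcI fpI[of m]] unfolding E_def .
    qed simp
    have Dne: "D m \<noteq> {}" for m
    proof -
      have "y \<in> E (Suc m)" using y unfolding J_def by auto
      then have "y \<in> f ` E m" unfolding E_def by (simp add: image_comp)
      then show ?thesis unfolding D_def by auto
    qed
    have Ddec: "D (Suc m) \<subseteq> D m" for m unfolding D_def using Edec by auto
    obtain z where "z \<in> \<Inter> (range D)" using my_nest[of D, OF Dcomp Dne Ddec] by blast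
    then have "z \<in> J" "f z = y" unfolding D_def J_def by auto
    then show ?thesis by blast
  qed
  define g where "g y = (SOME z. z \<in> J \<and> f z = y)" for y
  have g: "y \<in> J \<Longrightarrow> g y \<in> J \<and> f (g y) = y" for y
  proof -
    assume "y \<in> J"
    then have "\<exists>z. z \<in> J \<and> f z = y" using Jback by blast
    then show ?thesis unfolding g_def by (rule someI_ex)
  qed
  obtain y0 where y0: "y0 \<in> J" using Jne by blast
  have gJ: "(g^^k) y0 \<in> J" for k
  proof (induction k)
    case 0 then show ?case using y0 by simp
  next
    case (Suc k) then show ?case using g by simp
  qed
  define \<sigma> where "\<sigma> n = (if n \<ge> 0 then (f^^nat n) y0 else (g^^nat (-n)) y0)" for n :: int
  have \<sigma>K: "\<sigma> n \<in> K" for n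
  proof (cases "n \<ge> 0")
    case True
    have "y0 \<in> I" using y0 JI by auto
    then have "(f^^nat n) y0 \<in> I" using fpI by blast
    moreover have "\<sigma> n = (f^^nat n) y0" using True unfolding \<sigma>_def by simp
    ultimately show ?thesis using IK by auto
  next
    case False
    then have "\<sigma> n = (g^^nat (-n)) y0" unfolding \<sigma>_def by simp
    then show ?thesis using gJ JI IK by auto
  qed
  have \<sigma>f: "f (\<sigma> n) = \<sigma> (n + 1)" for n
  proof (cases "n \<ge> 0")
    case True
    then have e: "nat (n+1) = Suc (nat n)" by auto
    have "\<sigma> n = (f^^nat n) y0" using True unfolding \<sigma>_def by simp
    moreover have "\<sigma> (n+1) = (f^^nat (n+1)) y0" using True unfolding \<sigma>_def by simp
    ultimately show ?thesis unfolding e by simp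
  next
    case False
    then have "nat (-n) > 0" by simp
    then obtain k where k: "nat (-n) = Suc k" using gr0_implies_Suc by blast
    have "\<sigma> n = g ((g^^k) y0)" unfolding \<sigma>_def using False k by simp
    then have "f (\<sigma> n) = (g^^k) y0" using g[OF gJ[of k]] by simp
    moreover have "\<sigma> (n+1) = (g^^k) y0"
    proof (cases "n + 1 \<ge> 0")
      case True
      then have "n = -1" using False by auto
      then have "k = 0" using k by auto
      then show ?thesis unfolding \<sigma>_def using True \<open>n = -1\<close> by simp
    next
      case False
      then have "nat (-(n+1)) = k" using k by auto
      then show ?thesis unfolding \<sigma>_def using False by simp
    qed
    ultimately show ?thesis by simp
  qed
  have "\<sigma> 0 \<in> Inv f K" unfolding Inv_def using \<sigma>K \<sigma>f by (auto intro!: exI[of _ \<sigma>])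
  then show ?thesis by blast
qed



lemma topspace_quot: "topspace (quot_space N L) = quot_carrier N L"
proof
  show "topspace (quot_space N L) \<subseteq> quot_carrier N L"
    unfolding topspace_def using openin_quot_space quot_open_def by blast
  have e: "{x \<in> N. pquot L x \<in> quot_carrier N L} = N" unfolding quot_carrier_def by auto
  have "openin (top_of_set N) N" by (metis openin_topspace topspace_euclidean_subtopology)
  then have "openin (quot_space N L) (quot_carrier N L)"
    unfolding openin_quot_space quot_open_def e by simp
  then show "quot_carrier N L \<subseteq> topspace (quot_space N L)" by (rule openin_subset)
qed

lemma pquot_in: "x \<in> N \<Longrightarrow> pquot L x \<in> quot_carrier N L"
  unfolding quot_carrier_def by simp

lemma base_in: "L \<in> quot_carrier N L"
  unfolding quot_carrier_def by simp

lemma carrier_cases: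
  assumes "y \<in> quot_carrier N L"
  obtains "y = L" | x where "x \<in> N" "x \<notin> L" "y = {x}"
  using assms unfolding quot_carrier_def pquot_def by (auto split: if_splits)

lemma pquot_notin: "x \<notin> L \<Longrightarrow> pquot L x = {x}" unfolding pquot_def by simp
lemma pquot_inL: "x \<in> L \<Longrightarrow> pquot L x = L" unfolding pquot_def by simp
lemma sing_neq: "x \<notin> L \<Longrightarrow> {x} \<noteq> L" by auto

lemma cont_into_quot:
  assumes "\<And>x. x \<in> A \<Longrightarrow> \<phi> x \<in> quot_carrier N L"
    and "\<And>V. quot_open N L V \<Longrightarrow> openin (top_of_set A) {x\<in>A. \<phi> x \<in> V}"
  shows "continuous_map (top_of_set A) (quot_space N L) \<phi>"
  unfolding continuous_map_def topspace_quot openin_quot_space using assms by auto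

lemma cont_pquot: "continuous_map (top_of_set N) (quot_space N L) (pquot L)"
  by (rule cont_into_quot) (auto simp: pquot_in quot_open_def)

lemma cont_from_quot:
  assumes "g L \<in> topspace Y" and c: "continuous_map (top_of_set N) Y (\<lambda>x. g (pquot L x))"
  shows "continuous_map (quot_space N L) Y g"
  unfolding continuous_map_def topspace_quot
proof (intro conjI allI impI)
  show "g \<in> quot_carrier N L \<rightarrow> topspace Y"
  proof
    fix y assume "y \<in> quot_carrier N L"
    then show "g y \<in> topspace Y"
    proof (cases rule: carrier_cases)
      case 1 then show ?thesis using assms(1) by simp
    next
      case (2 x)
      then have "g y = g (pquot L x)" by (simp add: pquot_notin)
      then show ?thesis using continuous_map_image_subset_topspace[OF c] 2 by auto
    qed
  qed
  fix V assume V: "openin Y V"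
  have "{x \<in> N. pquot L x \<in> {y \<in> quot_carrier N L. g y \<in> V}} = {x \<in> topspace (top_of_set N). g (pquot L x) \<in> V}"
    using pquot_in by auto
  moreover have "openin (top_of_set N) {x \<in> topspace (top_of_set N). g (pquot L x) \<in> V}"
    by (rule openin_continuous_map_preimage[OF c V])
  ultimately show "openin (quot_space N L) {y \<in> quot_carrier N L. g y \<in> V}"
    unfolding openin_quot_space quot_open_def by auto
qed

lemma Inv_mono: "A \<subseteq> B \<Longrightarrow> Inv f A \<subseteq> Inv f B"
  unfolding Inv_def by blast
lemma Inv_sub: "Inv f A \<subseteq> A"
  unfolding Inv_def by blast



lemma iter_comm:
  assumes "\<And>y. y \<in> A \<Longrightarrow> r (G y) = H (r y)" and "\<And>y. y \<in> A \<Longrightarrow> G y \<in> A"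
  shows "y \<in> A \<Longrightarrow> r ((G^^k) y) = (H^^k) (r y) \<and> (G^^k) y \<in> A"
  by (induction k) (use assms in auto)

lemma cont_iter: "continuous_map X X g \<Longrightarrow> continuous_map X X (g^^k)"
proof (induction k)
  case 0 then show ?case by (simp add: id_def)
next
  case (Suc k)
  then have "continuous_map X X (g \<circ> (g^^k))" using continuous_map_compose by blast
  then show ?case by (simp only: funpow.simps(2))
qed

theorem mainTheorem18:
  fixes X U S N L L' :: "'a::metric_space set" and f :: "'a \<Rightarrow> 'a"
  assumes "locally compact X"
    and "openin (top_of_set X) U"
    and "continuous_on U f" and "f ` U \<subseteq> X"
    and "isolated_invariant_set X U f S"
    and "filtration_pair X U f S N L'"
    and "filtration_pair X U f S (N \<union> L) L"
    and "L' \<subseteq> L"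
    and "f ` L \<subseteq> (top_of_set X) interior_of L"
  shows "shift_equivalent (quot_space N L') L' (fP N L' f) (quot_space (N \<union> L) L) L (fP (N \<union> L) L f)"
proof -
  define C' where "C' = (top_of_set X) closure_of (N - L')"
  define CP where "CP = (top_of_set X) closure_of ((N \<union> L) - L)"
  have fU: "continuous_on U f" by fact
  note fp1 = assms(6)[unfolded filtration_pair_def, folded C'_def]
  note fp2 = assms(7)[unfolded filtration_pair_def, folded CP_def]
  have cN: "compact N" using fp1 by (elim conjE) assumption
  have cL': "compact L'" using fp1 by (elim conjE) assumption
  have L'N: "L' \<subseteq> N" using fp1 by (elim conjE) assumption
  have NU: "N \<subseteq> U" using fp1 by (elim conjE) assumption
  have cL: "compact L" using fp2 by (elim conjE) assumption
  have NLU: "N \<union> L \<subseteq> U" using fp2 by (elim conjE) assumption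
  then have LU: "L \<subseteq> U" by simp
  have L'L: "L' \<subseteq> L" by fact
  have rN: "regular_closed_in X N" using fp1 by (elim conjE) assumption
  have NX: "N \<subseteq> X"
  proof -
    have "(top_of_set X) closure_of ((top_of_set X) interior_of N) \<subseteq> X"
      using closure_of_subset_topspace[of "top_of_set X"] by simp
    then show ?thesis using rN unfolding regular_closed_in_def by simp
  qed
  have iso1: "isolating_nbhd X U f C'" using fp1 by (elim conjE) assumption
  have cC': "compact C'" using iso1 unfolding isolating_nbhd_def by (elim conjE) assumption
  then have clC': "closed C'" by (rule compact_imp_closed)
  have InvC': "Inv f C' = S" using fp1 by (elim conjE) assumption
  have InvCP: "Inv f CP = S" using fp2 by (elim conjE) assumption
  have fL'C': "f ` L' \<inter> C' = {}" using fp1 by (elim conjE) assumption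
  have fLCP: "f ` L \<inter> CP = {}" using fp2 by (elim conjE) assumption
  have ex1: "exit_set X f N \<subseteq> (top_of_set N) interior_of L'" using fp1 by (elim conjE) assumption
  have fLL: "f ` L \<subseteq> L" using assms(9) interior_of_subset[of "top_of_set X" L] by (rule order_trans)
  have NL'C': "N - L' \<subseteq> C'"
  proof -
    have "N - L' \<subseteq> topspace (top_of_set X)" using NX by auto
    then show ?thesis unfolding C'_def by (rule closure_of_subset)
  qed
  have exN: "f x \<in> N" if "x \<in> N" "x \<notin> L'" for x
  proof (rule ccontr)
    assume "f x \<notin> N"
    then have "f x \<notin> (top_of_set X) interior_of N" using interior_of_subset[of "top_of_set X" N] by blast
    then have "x \<in> exit_set X f N" unfolding exit_set_def using that by blast
    then have "x \<in> (top_of_set N) interior_of L'" using ex1 by blast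
    then show False using that interior_of_subset[of "top_of_set N" L'] by blast
  qed
  have fopen: "\<exists>O'. open O' \<and> U \<inter> f -` B = U \<inter> O'" if "open B" for B
    using continuous_openin_preimage_gen[OF fU that] unfolding openin_open by blast

  text \<open>bounded hitting time\<close>
  define K where "K = f ` L \<inter> C'"
  have cK: "compact K" unfolding K_def
    using compact_continuous_image[OF continuous_on_subset[OF fU LU] cL] clC' compact_Int_closed by blast
  have fK: "continuous_on K f"
  proof -
    have "K \<subseteq> U" unfolding K_def using fLL LU by blast
    then show ?thesis using continuous_on_subset[OF fU] by blast
  qed
  have InvK: "Inv f K = {}"
  proof -
    have "Inv f K \<subseteq> Inv f C'" by (rule Inv_mono) (auto simp: K_def)
    also have "\<dots> = Inv f CP" using InvC' InvCP by simp
    also have "\<dots> \<subseteq> CP" by (rule Inv_sub)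
    finally have "Inv f K \<subseteq> CP" .
    moreover have "Inv f K \<subseteq> f ` L" using Inv_sub[of f K] unfolding K_def by blast
    ultimately show ?thesis using fLCP by blast
  qed
  have "\<not> (\<forall>m. \<exists>y\<in>K. \<forall>j\<le>m. (f^^j) y \<in> K)"
    using chain_inv[OF cK fK] InvK by blast
  then obtain m0 where m0: "\<And>y. y \<in> K \<Longrightarrow> \<exists>j\<le>m0. (f^^j) y \<notin> K" by blast

  define G where "G = fP N L' f"
  define H where "H = fP (N \<union> L) L f"
  have GL': "G L' = L'" unfolding G_def fP_def by simp
  have HL: "H L = L" unfolding H_def fP_def by simp
  have Gx: "G {x} = pquot L' (f x)" if "x \<notin> L'" for x
    using that unfolding G_def fP_def by auto
  have Hx: "H {x} = pquot L (f x)" if "x \<notin> L" for x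
    using that unfolding H_def fP_def by auto
  have GkL': "(G^^k) L' = L'" for k by (induction k) (auto simp: GL')
  have HkL: "(H^^k) L = L" for k by (induction k) (auto simp: HL)
  have iterate: "(\<forall>i\<le>k. (f^^i) x \<in> N) \<and> (G^^k) (pquot L' x) = pquot L' ((f^^k) x)"
    if "x \<in> N" "\<forall>i<k. (f^^i) x \<notin> L'" for x k
    using that(2)
  proof (induction k)
    case 0 then show ?case using that(1) by simp
  next
    case (Suc k)
    then have IH: "\<forall>i\<le>k. (f^^i) x \<in> N" "(G^^k) (pquot L' x) = pquot L' ((f^^k) x)" by auto
    have nk: "(f^^k) x \<notin> L'" using Suc.prems by simp
    have inN: "(f^^k) x \<in> N" using IH by simp
    have "(f^^Suc k) x \<in> N" using exN[OF inN nk] by simp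
    then have A: "\<forall>i\<le>Suc k. (f^^i) x \<in> N" using IH(1) le_Suc_eq by blast
    have "(G^^Suc k) (pquot L' x) = G (pquot L' ((f^^k) x))" using IH(2) by simp
    also have "\<dots> = pquot L' ((f^^Suc k) x)" using nk by (simp add: pquot_notin Gx)
    finally show ?case using A by blast
  qed
  define M where "M = Suc m0"
  have hit: "(G^^M) (pquot L' x) = L'" if x: "x \<in> L" "x \<in> N" for x
  proof (cases "\<exists>i\<le>M. (f^^i) x \<in> L'")
    case True
    define i0 where "i0 = (LEAST i. (f^^i) x \<in> L')"
    obtain i where i: "i \<le> M" "(f^^i) x \<in> L'" using True by blast
    have i0L: "(f^^i0) x \<in> L'" unfolding i0_def using i(2) by (rule LeastI)
    have i0M: "i0 \<le> M" unfolding i0_def using i Least_le[of "\<lambda>i. (f^^i) x \<in> L'" i] by linarith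
    have "\<forall>j<i0. (f^^j) x \<notin> L'" unfolding i0_def using not_less_Least by blast
    then have "(G^^i0) (pquot L' x) = L'" using iterate[OF x(2)] i0L by (simp add: pquot_inL)
    moreover have "G^^M = G^^(M - i0) \<circ> G^^i0" using i0M funpow_add[of "M - i0" i0 G] by simp
    ultimately show ?thesis using GkL' by simp
  next
    case False
    then have "\<forall>i<Suc M. (f^^i) x \<notin> L'" by auto
    then have inN: "\<forall>i\<le>Suc M. (f^^i) x \<in> N" using iterate[OF x(2)] by blast
    have inL: "(f^^i) x \<in> L" for i by (induction i) (use x fLL in auto)
    have fjK: "(f^^j) (f x) \<in> K" if "j \<le> m0" for j
    proof -
      have e: "(f^^j) (f x) = f ((f^^j) x)" by (simp add: funpow_swap1)
      have sj: "Suc j \<le> M" using that unfolding M_def by simp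
      then have "Suc j \<le> Suc M" by simp
      then have "(f^^Suc j) x \<in> N" using inN by blast
      moreover have "(f^^Suc j) x \<notin> L'" using False sj by blast
      ultimately have "(f^^Suc j) x \<in> N - L'" by blast
      then have "(f^^Suc j) x \<in> C'" using NL'C' by blast
      then have "(f^^j) (f x) \<in> C'" by (simp add: funpow_swap1)
      moreover have "(f^^j) (f x) \<in> f ` L" unfolding e using inL by blast
      ultimately show ?thesis unfolding K_def by blast
    qed
    have "f x \<in> K" using fjK[of 0] by simp
    then show ?thesis using m0[of "f x"] fjK by blast
  qed
  have Gcar: "G y \<in> quot_carrier N L'" if "y \<in> quot_carrier N L'" for y
    using that
  proof (cases rule: carrier_cases)
    case 1 then show ?thesis using GL' base_in by simp
  next
    case (2 x)
    then show ?thesis using Gx[of x] exN[of x] pquot_in[of "f x" N L'] by simp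
  qed
  have Hcar: "H y \<in> quot_carrier (N \<union> L) L" if "y \<in> quot_carrier (N \<union> L) L" for y
    using that
  proof (cases rule: carrier_cases)
    case 1 then show ?thesis using HL base_in by simp
  next
    case (2 x)
    then have "x \<in> N" "x \<notin> L'" using L'L by auto
    then have "f x \<in> N \<union> L" using exN by simp
    then show ?thesis using Hx[of x] 2 pquot_in[of "f x" "N \<union> L" L] by simp
  qed
  define r where "r y = (if y = L' then L else pquot L (the_elem y))" for y
  define s where "s y = (if y = L then L' else (G^^M) y)" for y
  have rL': "r L' = L" unfolding r_def by simp
  have sL: "s L = L'" unfolding s_def by simp
  have rp: "r (pquot L' x) = pquot L x" if "x \<in> N" for x
  proof (cases "x \<in> L'")
    case True
    then have "x \<in> L" using L'L by blast
    then show ?thesis using True by (simp add: pquot_inL rL')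
  next
    case False
    then show ?thesis unfolding r_def by (auto simp: pquot_notin)
  qed
  have E1: "r (G y) = H (r y)" if "y \<in> quot_carrier N L'" for y
    using that
  proof (cases rule: carrier_cases)
    case 1 then show ?thesis using GL' rL' HL by simp
  next
    case (2 x)
    have fxN: "f x \<in> N" using exN 2 by simp
    have a: "r (G y) = pquot L (f x)" using 2 Gx rp fxN by simp
    have b: "r y = pquot L x" using 2 rp[of x] by (simp add: pquot_notin)
    show ?thesis
    proof (cases "x \<in> L")
      case True
      then have "f x \<in> L" using fLL by blast
      then show ?thesis using a b True HL by (simp add: pquot_inL)
    next
      case False
      then show ?thesis using a b Hx by (simp add: pquot_notin)
    qed
  qed
  have GMcomm: "G ((G^^M) y) = (G^^M) (G y)" for y by (simp add: funpow_swap1)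
  have E2: "s (H y) = G (s y)" if "y \<in> quot_carrier (N \<union> L) L" for y
    using that
  proof (cases rule: carrier_cases)
    case 1 then show ?thesis using HL sL GL' by simp
  next
    case (2 x)
    then have xN: "x \<in> N" and xL': "x \<notin> L'" using L'L by auto
    have fxN: "f x \<in> N" using exN xN xL' by simp
    have sy: "s y = (G^^M) y" using 2 unfolding s_def by auto
    have Gy: "G y = pquot L' (f x)" using 2 Gx xL' by simp
    show ?thesis
    proof (cases "f x \<in> L")
      case True
      have "H y = L" using 2 Hx True by (simp add: pquot_inL)
      then have "s (H y) = L'" using sL by simp
      moreover have "G (s y) = L'" using sy GMcomm Gy hit[OF True fxN] by simp
      ultimately show ?thesis by simp
    next
      case False
      have "H y = {f x}" using 2 Hx False by (simp add: pquot_notin)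
      then have "s (H y) = (G^^M) {f x}" unfolding s_def using False by auto
      moreover have "f x \<notin> L'" using False L'L by blast
      ultimately show ?thesis using sy GMcomm Gy by (simp add: pquot_notin)
    qed
  qed
  have E3: "s (r y) = (G^^M) y" if "y \<in> quot_carrier N L'" for y
    using that
  proof (cases rule: carrier_cases)
    case 1 then show ?thesis using rL' sL GkL' by simp
  next
    case (2 x)
    have ry: "r y = pquot L x" using 2 rp[of x] by (simp add: pquot_notin)
    show ?thesis
    proof (cases "x \<in> L")
      case True
      then show ?thesis using ry sL hit[OF True] 2 by (simp add: pquot_inL pquot_notin)
    next
      case False
      then show ?thesis using ry 2 unfolding s_def by (auto simp: pquot_notin)
    qed
  qed
  have E4: "r (s y) = (H^^M) y" if "y \<in> quot_carrier (N \<union> L) L" for y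
    using that
  proof (cases rule: carrier_cases)
    case 1 then show ?thesis using rL' sL HkL by simp
  next
    case (2 x)
    then have xN: "x \<in> N" and xL': "x \<notin> L'" using L'L by auto
    have yc: "y \<in> quot_carrier N L'" using 2 xN xL' pquot_in[of x N L'] by (simp add: pquot_notin)
    have "r ((G^^M) y) = (H^^M) (r y)"
      using iter_comm[of "quot_carrier N L'" r G H y M] E1 Gcar yc by blast
    moreover have "r y = y" using 2 rp[OF xN] xL' by (simp add: pquot_notin)
    moreover have "s y = (G^^M) y" using 2 unfolding s_def by auto
    ultimately show ?thesis by simp
  qed
  have Gcont: "continuous_map (quot_space N L') (quot_space N L') G"
  proof (rule cont_from_quot)
    show "G L' \<in> topspace (quot_space N L')" by (simp add: GL' base_in topspace_quot)
    show "continuous_map (top_of_set N) (quot_space N L') (\<lambda>x. G (pquot L' x))"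
    proof (rule cont_into_quot)
      fix x assume "x \<in> N"
      then have "pquot L' x \<in> quot_carrier N L'" by (rule pquot_in)
      then show "G (pquot L' x) \<in> quot_carrier N L'" by (rule Gcar)
    next
      fix V assume V: "quot_open N L' V"
      define W where "W = {z\<in>N. pquot L' z \<in> V}"
      have "openin (top_of_set N) W" using V unfolding quot_open_def W_def by blast
      then obtain Ob where Ob: "open Ob" "W = N \<inter> Ob" unfolding openin_open by blast
      show "openin (top_of_set N) {x\<in>N. G (pquot L' x) \<in> V}"
      proof (subst openin_subopen, intro ballI)
        fix x assume x: "x \<in> {x\<in>N. G (pquot L' x) \<in> V}"
        show "\<exists>T. openin (top_of_set N) T \<and> x \<in> T \<and> T \<subseteq> {x\<in>N. G (pquot L' x) \<in> V}"
        proof (cases "x \<in> L'")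
          case False
          have fxN: "f x \<in> N" using exN x False by blast
          have "G (pquot L' x) = pquot L' (f x)" using False Gx by (simp add: pquot_notin)
          then have "f x \<in> W" using x fxN unfolding W_def by simp
          then have fxO: "f x \<in> Ob" using Ob by blast
          obtain Oc where Oc: "open Oc" "U \<inter> f -` Ob = U \<inter> Oc" using fopen[OF Ob(1)] by blast
          define T where "T = N \<inter> (Oc \<inter> - L')"
          have "open (Oc \<inter> - L')" using Oc(1) compact_imp_closed[OF cL'] by (intro open_Int) auto
          then have "openin (top_of_set N) T" unfolding T_def openin_open by blast
          moreover have "x \<in> T"
          proof -
            have "x \<in> U \<inter> f -` Ob" using x NU fxO by blast
            then show ?thesis unfolding T_def using Oc(2) x False by blast
          qed
          moreover have "T \<subseteq> {x\<in>N. G (pquot L' x) \<in> V}"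
          proof
            fix y assume y: "y \<in> T"
            then have yN: "y \<in> N" and yL': "y \<notin> L'" and "y \<in> U \<inter> Oc" unfolding T_def using NU by auto
            then have "f y \<in> Ob" using Oc(2) by blast
            moreover have "f y \<in> N" using exN yN yL' by blast
            ultimately have "f y \<in> W" using Ob(2) by blast
            then have "pquot L' (f y) \<in> V" unfolding W_def by blast
            moreover have "G (pquot L' y) = pquot L' (f y)" using yL' Gx by (simp add: pquot_notin)
            ultimately show "y \<in> {x\<in>N. G (pquot L' x) \<in> V}" using yN by simp
          qed
          ultimately show ?thesis by blast
        next
          case True
          have L'V: "L' \<in> V" using x True GL' by (simp add: pquot_inL)
          have "f x \<notin> C'" using fL'C' True by blast
          obtain Oc where Oc: "open Oc" "U \<inter> f -` (- C') = U \<inter> Oc"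
            using fopen[of "- C'"] clC' by auto
          define T where "T = N \<inter> Oc"
          have "openin (top_of_set N) T" unfolding T_def openin_open using Oc(1) by blast
          moreover have "x \<in> T"
          proof -
            have "x \<in> U \<inter> f -` (- C')" using x NU \<open>f x \<notin> C'\<close> by blast
            then show ?thesis unfolding T_def using Oc(2) x by blast
          qed
          moreover have "T \<subseteq> {x\<in>N. G (pquot L' x) \<in> V}"
          proof
            fix y assume y: "y \<in> T"
            then have yN: "y \<in> N" and yUO: "y \<in> U \<inter> Oc" unfolding T_def using NU by auto
            have "G (pquot L' y) = L'"
            proof (cases "y \<in> L'")
              case True then show ?thesis using GL' by (simp add: pquot_inL)
            next
              case False
              have "f y \<notin> C'" using yUO Oc(2) by blast
              moreover have "f y \<in> N" using exN yN False by blast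
              ultimately have "f y \<in> L'" using NL'C' by blast
              then show ?thesis using False Gx by (simp add: pquot_notin pquot_inL)
            qed
            then show "y \<in> {x\<in>N. G (pquot L' x) \<in> V}" using yN L'V by simp
          qed
          ultimately show ?thesis by blast
        qed
      qed
    qed
  qed
  have rcont: "continuous_map (quot_space N L') (quot_space (N \<union> L) L) r"
  proof (rule cont_from_quot)
    show "r L' \<in> topspace (quot_space (N \<union> L) L)" by (simp add: rL' base_in topspace_quot)
    have "continuous_map (top_of_set N) (quot_space (N \<union> L) L) (pquot L)"
      by (rule continuous_map_from_subtopology_mono[OF cont_pquot[of "N \<union> L" L]]) simp
    then show "continuous_map (top_of_set N) (quot_space (N \<union> L) L) (\<lambda>x. r (pquot L' x))"
      by (rule continuous_map_eq) (simp add: rp)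
  qed
  have scont: "continuous_map (quot_space (N \<union> L) L) (quot_space N L') s"
  proof (rule cont_from_quot)
    show "s L \<in> topspace (quot_space N L')" by (simp add: sL base_in topspace_quot)
    define h where "h x = (if x \<in> N then (G^^M) (pquot L' x) else L')" for x
    let ?X = "top_of_set (N \<union> L)"
    have cF: "continuous_map (top_of_set N) (quot_space N L') (\<lambda>x. (G^^M) (pquot L' x))"
      using continuous_map_compose[OF cont_pquot[of N L'] cont_iter[OF Gcont, of M]] by (simp add: o_def)
    have clN: "closedin ?X N" by (rule closed_subset) (auto intro: compact_imp_closed cN)
    have clL: "closedin ?X L" by (rule closed_subset) (auto intro: compact_imp_closed cL)
    have cl1: "?X closure_of {x. x \<in> N} \<subseteq> N" by (rule closure_of_minimal) (use clN in auto)
    have cl2: "?X closure_of (topspace ?X - {x. x \<in> N}) \<subseteq> L" by (rule closure_of_minimal) (use clL in auto)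
    have cl3: "?X closure_of {x. x \<notin> N} \<subseteq> L"
    proof -
      have "?X closure_of {x. x \<notin> N} = ?X closure_of (topspace ?X - {x. x \<in> N})"
      proof -
        have e: "topspace ?X \<inter> {x. x \<notin> N} = topspace ?X - {x. x \<in> N}" by auto
        show ?thesis by (subst closure_of_restrict) (simp only: e)
      qed
      then show ?thesis using cl2 by simp
    qed
    have hcont: "continuous_map ?X (quot_space N L') h"
      unfolding h_def
    proof (rule continuous_map_cases)
      have "continuous_map (top_of_set ((N \<union> L) \<inter> (?X closure_of {x. x \<in> N}))) (quot_space N L') (\<lambda>x. (G^^M) (pquot L' x))"
        by (rule continuous_map_from_subtopology_mono[OF cF]) (use cl1 in auto)
      then show "continuous_map (subtopology ?X (?X closure_of {x. x \<in> N})) (quot_space N L') (\<lambda>x. (G^^M) (pquot L' x))"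
        by (simp add: subtopology_subtopology)
      show "continuous_map (subtopology ?X (?X closure_of {x. x \<notin> N})) (quot_space N L') (\<lambda>x. L')"
        by (simp add: base_in topspace_quot)
      fix x assume "x \<in> ?X frontier_of {x. x \<in> N}"
      then have "x \<in> N" "x \<in> L" using cl1 cl2 unfolding frontier_of_closures by auto
      then show "(G^^M) (pquot L' x) = L'" using hit by blast
    qed
    show "continuous_map (top_of_set (N \<union> L)) (quot_space N L') (\<lambda>x. s (pquot L x))"
    proof (rule continuous_map_eq[OF hcont])
      fix x assume "x \<in> topspace ?X"
      then have x: "x \<in> N \<union> L" by simp
      show "h x = s (pquot L x)"
      proof (cases "x \<in> L")
        case True
        then show ?thesis unfolding h_def using hit sL by (simp add: pquot_inL)
      next
        case False
        then have "x \<in> N" "x \<notin> L'" using x L'L by auto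
        then show ?thesis unfolding h_def s_def using False by (auto simp: pquot_notin)
      qed
    qed
  qed
  have "M > 0" unfolding M_def by simp
  then show ?thesis
    unfolding shift_equivalent_def G_def[symmetric] H_def[symmetric] topspace_quot
    using rcont scont rL' sL E1 E2 E3 E4
    by (intro exI[of _ M] conjI exI[of _ r] exI[of _ s] ballI) auto
qed
end
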